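(* Let $(X_n)_{n\le0}$ be a strongly monotonic Markov process with values in $[0,1]^d$, with $\rho$ and $\delta$ as below. Let $(\rho_n)_{n\le0}$ be the iterated Kantorovich pseudometrics of $(X_n)$ starting from $\rho_0=\rho$ on $A_0$, and for each $k$ let $(\delta^{(k)}_n)_{n\le0}$ be the iterated Kantorovich pseudometrics of the coordinate process $(X_n(k))_{n\le0}$ starting from $\delta$. Then for every $n\le -1$ and all $x_n,x'_n\in A_n$, $\rho_n(x_n,x'_n)$ is the Kantorovich distance (induced by $\rho$) between $\mathcal{L}(X_0\mid X_n=x_n)$ and $\mathcal{L}(X_0\mid X_n=x'_n)$, and $$\rho_n(x_n,x'_n)=\sum_{k=1}^d a_k\,\delta^{(k)}_n\big(x_n(k),x'_n(k)\big).$$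
   Context: $d\ge1$ integer or $d=\infty$; $A_n$ is the support of the law of $X_n$; $\rho(x,x')=\sum_{k=1}^d a_k|x(k)-x'(k)|$ with $a_k>0$, $\sum a_k=1$; $\delta(s,t)=|s-t|$. Kantorovich pseudometric: $\rho'(\mu,\nu)=\inf\mathbb{E}[\rho(X_\mu,X_\nu)]$ over couplings. Iterated Kantorovich pseudometrics of a Markov process $(Z_n)$ starting from a pseudometric $\rho_0$ on the state space at time $0$: $\rho_n(z,z')=(\rho_{n+1})'\big(\mathcal{L}(Z_{n+1}\mid Z_n=z),\mathcal{L}(Z_{n+1}\mid Z_n=z')\big)$ for $n<0$. Monotonic ($\mathbb{R}^d$-valued): for each $n<0$ and $x,x'\in A_n$ there is a coupling $(Y,Y')$ of $\mathcal{L}(X_{n+1}\mid X_n=x)$ and $\mathcal{L}(X_{n+1}\mid X_n=x')$, depending measurably on $(x,x')$, with $x(k)\le x'(k)\Rightarrow Y(k)\le Y'(k)$ a.s. and $x(k)\ge x'(k)\Rightarrow Y(k)\ge Y'(k)$ a.s. for each $k$. Strongly monotonic: monotonic, each coordinate process Markovian, and its natural filtration immersed in that of $(X_n)$. *)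

theory Defs
  imports "HOL-Probability.Probability"
begin

definition coords :: "enat \<Rightarrow> nat set" where
  "coords d = {k. 1 \<le> k \<and> enat k \<le> d}"

text \<open>The cube [0,1]^d, realised inside nat => real (coordinates outside {1..d} are 0);
  nat => real carries the product topology (Function_Topology) and its Borel sigma-algebra.\<close>
definition cube :: "enat \<Rightarrow> (nat \<Rightarrow> real) set" where
  "cube d = {x. (\<forall>k\<in>coords d. 0 \<le> x k \<and> x k \<le> 1) \<and> (\<forall>k. k \<notin> coords d \<longrightarrow> x k = 0)}"

definition rho :: "enat \<Rightarrow> (nat \<Rightarrow> real) \<Rightarrow> (nat \<Rightarrow> real) \<Rightarrow> (nat \<Rightarrow> real) \<Rightarrow> real" where
  "rho d a x x' = (\<Sum>\<^sub>\<infinity>k\<in>coords d. a k * \<bar>x k - x' k\<bar>)"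

definition delta :: "real \<Rightarrow> real \<Rightarrow> real" where
  "delta s t = \<bar>s - t\<bar>"

definition measure_support :: "'a::topological_space measure \<Rightarrow> 'a set" where
  "measure_support M = {x. \<forall>U. open U \<longrightarrow> x \<in> U \<longrightarrow> emeasure M U \<noteq> 0}"

definition couplings :: "'a measure \<Rightarrow> 'a measure \<Rightarrow> 'a measure \<Rightarrow> ('a \<times> 'a) measure set" where
  "couplings M \<mu> \<nu> = {\<pi> \<in> space (prob_algebra (M \<Otimes>\<^sub>M M)).
       distr \<pi> M fst = \<mu> \<and> distr \<pi> M snd = \<nu>}"

definition kantorovich :: "'a measure \<Rightarrow> ('a \<Rightarrow> 'a \<Rightarrow> real) \<Rightarrow> 'a measure \<Rightarrow> 'a measure \<Rightarrow> real" where
  "kantorovich M r \<mu> \<nu> =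
     enn2real (\<Sqinter>\<pi>\<in>couplings M \<mu> \<nu>. \<integral>\<^sup>+ z. ennreal (r (fst z) (snd z)) \<partial>\<pi>)"

text \<open>Iterated Kantorovich pseudometrics: K n z is (a version of) the law of Z_{n+1} given Z_n = z
  (n < 0).  iter_kant M K r0 m is the pseudometric at time -m.\<close>
primrec iter_kant :: "'a measure \<Rightarrow> (int \<Rightarrow> 'a \<Rightarrow> 'a measure) \<Rightarrow> ('a \<Rightarrow> 'a \<Rightarrow> real) \<Rightarrow> nat
    \<Rightarrow> 'a \<Rightarrow> 'a \<Rightarrow> real" where
  "iter_kant M K r0 0 = r0"
| "iter_kant M K r0 (Suc m) = (\<lambda>z z'. kantorovich M (iter_kant M K r0 m)
      (K (- int m - 1) z) (K (- int m - 1) z'))"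

definition iterated_kantorovich :: "'a measure \<Rightarrow> (int \<Rightarrow> 'a \<Rightarrow> 'a measure) \<Rightarrow> ('a \<Rightarrow> 'a \<Rightarrow> real)
    \<Rightarrow> int \<Rightarrow> 'a \<Rightarrow> 'a \<Rightarrow> real" where
  "iterated_kantorovich M K r0 n = iter_kant M K r0 (nat (- n))"

primrec law_to_0 :: "'a measure \<Rightarrow> (int \<Rightarrow> 'a \<Rightarrow> 'a measure) \<Rightarrow> nat \<Rightarrow> 'a \<Rightarrow> 'a measure" where
  "law_to_0 M K 0 = (\<lambda>z. return M z)"
| "law_to_0 M K (Suc m) = (\<lambda>z. bind (K (- int m - 1) z) (law_to_0 M K m))"

definition cond_law_X0 :: "'a measure \<Rightarrow> (int \<Rightarrow> 'a \<Rightarrow> 'a measure) \<Rightarrow> int \<Rightarrow> 'a \<Rightarrow> 'a measure" where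
  "cond_law_X0 M K n z = law_to_0 M K (nat (- n)) z"

definition monotone_coupling :: "enat \<Rightarrow> ((nat \<Rightarrow> real) \<times> (nat \<Rightarrow> real)) measure
    \<Rightarrow> (nat \<Rightarrow> real) \<Rightarrow> (nat \<Rightarrow> real) \<Rightarrow> bool" where
  "monotone_coupling d \<pi> x x' \<longleftrightarrow> (\<forall>k\<in>coords d.
      (x k \<le> x' k \<longrightarrow> (AE z in \<pi>. fst z k \<le> snd z k)) \<and>
      (x k \<ge> x' k \<longrightarrow> (AE z in \<pi>. fst z k \<ge> snd z k)))"

end

theory Submission
  imports Defs
begin


definition clip :: "real \<Rightarrow> real" where "clip t = max 0 (min 1 t)"

lemma clip_range[simp]: "0 \<le> clip t" "clip t \<le> 1"
  by (auto simp: clip_def)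
lemma clip_mono: "s \<le> t \<Longrightarrow> clip s \<le> clip t"
  by (auto simp: clip_def)
lemma clip_id: "0 \<le> t \<Longrightarrow> t \<le> 1 \<Longrightarrow> clip t = t"
  by (auto simp: clip_def)
lemma clip_meas[measurable]: "clip \<in> borel_measurable borel"
  unfolding clip_def by measurable

lemma infsum_nat_SUP:
  fixes f :: "nat \<Rightarrow> ennreal"
  shows "infsum f A = (SUP n. sum f (A \<inter> {..<n}))"
proof -
  have "infsum f A = (SUP F\<in>{F. finite F \<and> F\<subseteq>A}. sum f F)"
    by (rule nonneg_infsum_complete) auto
  also have "\<dots> = (SUP n. sum f (A \<inter> {..<n}))"
  proof (rule antisym)
    show "(SUP F\<in>{F. finite F \<and> F\<subseteq>A}. sum f F) \<le> (SUP n. sum f (A \<inter> {..<n}))"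
    proof (rule SUP_least)
      fix F assume F: "F \<in> {F. finite F \<and> F\<subseteq>A}"
      then have "F \<subseteq> A \<inter> {..<Suc (Max (insert 0 F))}"
        using Max_ge[of "insert 0 F"] by (auto simp: less_Suc_eq_le)
      then have "sum f F \<le> sum f (A \<inter> {..<Suc (Max (insert 0 F))})"
        by (intro sum_mono2) auto
      also have "\<dots> \<le> (SUP n. sum f (A \<inter> {..<n}))" by (rule SUP_upper) auto
      finally show "sum f F \<le> (SUP n. sum f (A \<inter> {..<n}))" .
    qed
    show "(SUP n. sum f (A \<inter> {..<n})) \<le> (SUP F\<in>{F. finite F \<and> F\<subseteq>A}. sum f F)"
      by (rule SUP_least, rule SUP_upper) auto
  qed
  finally show ?thesis .
qed

lemma nn_integral_infsum:
  fixes f :: "nat \<Rightarrow> 'a \<Rightarrow> ennreal"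
  assumes [measurable]: "\<And>k. f k \<in> borel_measurable M"
  shows "(\<integral>\<^sup>+x. infsum (\<lambda>k. f k x) A \<partial>M) = infsum (\<lambda>k. \<integral>\<^sup>+x. f k x \<partial>M) A"
proof -
  have "(\<integral>\<^sup>+x. infsum (\<lambda>k. f k x) A \<partial>M) = (\<integral>\<^sup>+x. (SUP n. (\<lambda>n x. sum (\<lambda>k. f k x) (A \<inter> {..<n})) n x) \<partial>M)"
    by (simp add: infsum_nat_SUP)
  also have "\<dots> = (SUP n. \<integral>\<^sup>+x. sum (\<lambda>k. f k x) (A \<inter> {..<n}) \<partial>M)"
  proof (rule nn_integral_monotone_convergence_SUP)
    show "incseq (\<lambda>n x. sum (\<lambda>k. f k x) (A \<inter> {..<n}))"
      by (auto simp: incseq_def le_fun_def intro!: sum_mono2)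
  qed measurable
  also have "\<dots> = (SUP n. sum (\<lambda>k. \<integral>\<^sup>+x. f k x \<partial>M) (A \<inter> {..<n}))"
    by (subst nn_integral_sum) auto
  also have "\<dots> = infsum (\<lambda>k. \<integral>\<^sup>+x. f k x \<partial>M) A"
    by (simp add: infsum_nat_SUP)
  finally show ?thesis .
qed

lemma ennreal_infsum_real:
  fixes f :: "'b \<Rightarrow> real"
  assumes "f summable_on A" "\<And>x. x \<in> A \<Longrightarrow> 0 \<le> f x"
  shows "ennreal (infsum f A) = infsum (\<lambda>x. ennreal (f x)) A"
proof -
  have "\<And>F. \<lbrakk>finite F; F \<subseteq> A\<rbrakk> \<Longrightarrow> sum (ennreal \<circ> f) F = ennreal (sum f F)"
    by (metis (mono_tags, lifting) comp_def assms(2) subsetD sum.cong sum_ennreal)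
  then have "ennreal (infsum f A) = infsum (ennreal \<circ> f) A"
    by (simp add: infsum_comm_additive_general assms(1))
  then show ?thesis by (simp add: comp_def)
qed



lemma couplingD:
  assumes "\<pi> \<in> couplings M \<mu> \<nu>"
  shows "prob_space \<pi>" "sets \<pi> = sets (M \<Otimes>\<^sub>M M)" "distr \<pi> M fst = \<mu>" "distr \<pi> M snd = \<nu>"
  using assms by (auto simp: couplings_def space_prob_algebra)

lemma coupling_L1:
  fixes h :: "'a \<Rightarrow> real"
  assumes \<pi>: "\<pi> \<in> couplings M \<mu> \<nu>" and h[measurable]: "h \<in> borel_measurable M"
    and h01: "\<And>x. 0 \<le> h x" "\<And>x. h x \<le> 1"
  shows "ennreal \<bar>(\<integral>x. h x \<partial>\<mu>) - (\<integral>x. h x \<partial>\<nu>)\<bar> \<le> (\<integral>\<^sup>+z. ennreal \<bar>h (fst z) - h (snd z)\<bar> \<partial>\<pi>)"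
    and "(AE z in \<pi>. h (fst z) \<le> h (snd z)) \<or> (AE z in \<pi>. h (snd z) \<le> h (fst z)) \<Longrightarrow>
         (\<integral>\<^sup>+z. ennreal \<bar>h (fst z) - h (snd z)\<bar> \<partial>\<pi>) = ennreal \<bar>(\<integral>x. h x \<partial>\<mu>) - (\<integral>x. h x \<partial>\<nu>)\<bar>"
proof -
  note cD = couplingD[OF \<pi>]
  interpret prob_space \<pi> by (rule cD(1))
  have [measurable_cong]: "sets \<pi> = sets (M \<Otimes>\<^sub>M M)" by (rule cD(2))
  have i1: "(\<integral>x. h x \<partial>\<mu>) = (\<integral>z. h (fst z) \<partial>\<pi>)"
    unfolding cD(3)[symmetric] by (rule integral_distr) measurable
  have i2: "(\<integral>x. h x \<partial>\<nu>) = (\<integral>z. h (snd z) \<partial>\<pi>)"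
    unfolding cD(4)[symmetric] by (rule integral_distr) measurable
  have intf: "integrable \<pi> (\<lambda>z. h (fst z))" "integrable \<pi> (\<lambda>z. h (snd z))"
    by (auto intro!: integrable_const_bound[where B=1] simp: h01 abs_le_iff intro: order_trans[OF _ h01(2)])
  have intd: "integrable \<pi> (\<lambda>z. \<bar>h (fst z) - h (snd z)\<bar>)"
    using intf by auto
  have eq1: "(\<integral>\<^sup>+z. ennreal \<bar>h (fst z) - h (snd z)\<bar> \<partial>\<pi>) = ennreal (\<integral>z. \<bar>h (fst z) - h (snd z)\<bar> \<partial>\<pi>)"
    by (rule nn_integral_eq_integral[OF intd]) auto
  have diff: "(\<integral>x. h x \<partial>\<mu>) - (\<integral>x. h x \<partial>\<nu>) = (\<integral>z. h (fst z) - h (snd z) \<partial>\<pi>)"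
    using intf by (simp add: i1 i2)
  have "\<bar>(\<integral>z. h (fst z) - h (snd z) \<partial>\<pi>)\<bar> \<le> (\<integral>z. \<bar>h (fst z) - h (snd z)\<bar> \<partial>\<pi>)"
    using integral_norm_bound[of \<pi> "\<lambda>z. h (fst z) - h (snd z)"] by simp
  then show "ennreal \<bar>(\<integral>x. h x \<partial>\<mu>) - (\<integral>x. h x \<partial>\<nu>)\<bar> \<le> (\<integral>\<^sup>+z. ennreal \<bar>h (fst z) - h (snd z)\<bar> \<partial>\<pi>)"
    unfolding eq1 diff by (rule ennreal_leI)
  assume "(AE z in \<pi>. h (fst z) \<le> h (snd z)) \<or> (AE z in \<pi>. h (snd z) \<le> h (fst z))"
  then have "(\<integral>z. \<bar>h (fst z) - h (snd z)\<bar> \<partial>\<pi>) = \<bar>(\<integral>z. h (fst z) - h (snd z) \<partial>\<pi>)\<bar>"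
  proof
    assume ae: "AE z in \<pi>. h (fst z) \<le> h (snd z)"
    have "(\<integral>z. \<bar>h (fst z) - h (snd z)\<bar> \<partial>\<pi>) = (\<integral>z. - (h (fst z) - h (snd z)) \<partial>\<pi>)"
      by (rule integral_cong_AE) (use ae in auto)
    also have "\<dots> = - (\<integral>z. h (fst z) - h (snd z) \<partial>\<pi>)" by (rule integral_minus)
    also have "\<dots> = \<bar>(\<integral>z. h (fst z) - h (snd z) \<partial>\<pi>)\<bar>"
    proof -
      have "(\<integral>z. h (fst z) - h (snd z) \<partial>\<pi>) \<le> (\<integral>z. 0 \<partial>\<pi>)"
        by (rule integral_mono_AE) (use intf ae in auto)
      then show ?thesis by simp
    qed
    finally show ?thesis .
  next
    assume ae: "AE z in \<pi>. h (snd z) \<le> h (fst z)"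
    have "(\<integral>z. \<bar>h (fst z) - h (snd z)\<bar> \<partial>\<pi>) = (\<integral>z. (h (fst z) - h (snd z)) \<partial>\<pi>)"
      by (rule integral_cong_AE) (use ae in auto)
    also have "\<dots> = \<bar>(\<integral>z. h (fst z) - h (snd z) \<partial>\<pi>)\<bar>"
    proof -
      have "(\<integral>z. 0 \<partial>\<pi>) \<le> (\<integral>z. h (fst z) - h (snd z) \<partial>\<pi>)"
        by (rule integral_mono_AE) (use intf ae in auto)
      then show ?thesis by simp
    qed
    finally show ?thesis .
  qed
  then show "(\<integral>\<^sup>+z. ennreal \<bar>h (fst z) - h (snd z)\<bar> \<partial>\<pi>) = ennreal \<bar>(\<integral>x. h x \<partial>\<mu>) - (\<integral>x. h x \<partial>\<nu>)\<bar>"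
    unfolding eq1 diff by simp
qed



lemma summable_bounded01:
  fixes a t :: "nat \<Rightarrow> real"
  assumes "a summable_on I" "\<And>k. k \<in> I \<Longrightarrow> 0 \<le> a k" "\<And>k. k \<in> I \<Longrightarrow> 0 \<le> t k" "\<And>k. k \<in> I \<Longrightarrow> t k \<le> 1"
  shows "(\<lambda>k. a k * t k) summable_on I"
  by (rule summable_on_comparison_test[OF assms(1)])
     (use assms in \<open>auto intro: mult_left_le mult_nonneg_nonneg\<close>)

lemma coupling_diff_le1:
  fixes h :: "'a \<Rightarrow> real"
  assumes \<pi>: "\<pi> \<in> couplings M \<mu> \<nu>" and h[measurable]: "h \<in> borel_measurable M"
    and h01: "\<And>x. 0 \<le> h x" "\<And>x. h x \<le> 1"
  shows "\<bar>(\<integral>x. h x \<partial>\<mu>) - (\<integral>x. h x \<partial>\<nu>)\<bar> \<le> 1"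
proof -
  note cD = couplingD[OF \<pi>]
  interpret prob_space \<pi> by (rule cD(1))
  have "ennreal \<bar>(\<integral>x. h x \<partial>\<mu>) - (\<integral>x. h x \<partial>\<nu>)\<bar> \<le> (\<integral>\<^sup>+z. ennreal \<bar>h (fst z) - h (snd z)\<bar> \<partial>\<pi>)"
    by (rule coupling_L1(1)[OF \<pi> h h01])
  also have "\<dots> \<le> (\<integral>\<^sup>+z. 1 \<partial>\<pi>)"
  proof (rule nn_integral_mono)
    fix z show "ennreal \<bar>h (fst z) - h (snd z)\<bar> \<le> 1"
      using h01(1)[of "fst z"] h01(2)[of "fst z"] h01(1)[of "snd z"] h01(2)[of "snd z"] by simp
  qed
  also have "\<dots> = 1" by (simp add: emeasure_space_1)
  finally show ?thesis by simp
qed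

lemma coupling_L2:
  fixes h :: "nat \<Rightarrow> 'a \<Rightarrow> real" and a :: "nat \<Rightarrow> real"
  assumes \<pi>: "\<pi> \<in> couplings M \<mu> \<nu>" and h[measurable]: "\<And>k. h k \<in> borel_measurable M"
    and h01: "\<And>k x. 0 \<le> h k x" "\<And>k x. h k x \<le> 1"
    and a: "a summable_on I" "\<And>k. k \<in> I \<Longrightarrow> 0 \<le> a k"
  shows "ennreal (\<Sum>\<^sub>\<infinity>k\<in>I. a k * \<bar>(\<integral>x. h k x \<partial>\<mu>) - (\<integral>x. h k x \<partial>\<nu>)\<bar>)
           \<le> (\<integral>\<^sup>+z. ennreal (\<Sum>\<^sub>\<infinity>k\<in>I. a k * \<bar>h k (fst z) - h k (snd z)\<bar>) \<partial>\<pi>)"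
    and "(\<forall>k\<in>I. (AE z in \<pi>. h k (fst z) \<le> h k (snd z)) \<or> (AE z in \<pi>. h k (snd z) \<le> h k (fst z))) \<Longrightarrow>
         (\<integral>\<^sup>+z. ennreal (\<Sum>\<^sub>\<infinity>k\<in>I. a k * \<bar>h k (fst z) - h k (snd z)\<bar>) \<partial>\<pi>)
           = ennreal (\<Sum>\<^sub>\<infinity>k\<in>I. a k * \<bar>(\<integral>x. h k x \<partial>\<mu>) - (\<integral>x. h k x \<partial>\<nu>)\<bar>)"
proof -
  note cD = couplingD[OF \<pi>]
  interpret prob_space \<pi> by (rule cD(1))
  have [measurable_cong]: "sets \<pi> = sets (M \<Otimes>\<^sub>M M)" by (rule cD(2))
  have hb: "\<bar>h k x - h k y\<bar> \<le> 1" for k x y using h01[of k x] h01[of k y] by auto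
  have L: "ennreal (\<Sum>\<^sub>\<infinity>k\<in>I. a k * \<bar>(\<integral>x. h k x \<partial>\<mu>) - (\<integral>x. h k x \<partial>\<nu>)\<bar>)
      = (\<Sum>\<^sub>\<infinity>k\<in>I. ennreal (a k) * ennreal \<bar>(\<integral>x. h k x \<partial>\<mu>) - (\<integral>x. h k x \<partial>\<nu>)\<bar>)"
    apply (subst ennreal_infsum_real)
      apply (rule summable_bounded01[OF a])
    using coupling_diff_le1[OF \<pi> h h01] a(2)
    by (auto intro!: infsum_cong simp: ennreal_mult)
  have R1: "ennreal (\<Sum>\<^sub>\<infinity>k\<in>I. a k * \<bar>h k (fst z) - h k (snd z)\<bar>)
       = (\<Sum>\<^sub>\<infinity>k\<in>I. ennreal (a k) * ennreal \<bar>h k (fst z) - h k (snd z)\<bar>)" for z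
    apply (subst ennreal_infsum_real)
      apply (rule summable_bounded01[OF a])
    using hb a(2) by (auto intro!: infsum_cong simp: ennreal_mult)
  have R: "(\<integral>\<^sup>+z. ennreal (\<Sum>\<^sub>\<infinity>k\<in>I. a k * \<bar>h k (fst z) - h k (snd z)\<bar>) \<partial>\<pi>)
     = (\<Sum>\<^sub>\<infinity>k\<in>I. ennreal (a k) * (\<integral>\<^sup>+z. ennreal \<bar>h k (fst z) - h k (snd z)\<bar> \<partial>\<pi>))"
    unfolding R1
    by (subst nn_integral_infsum) (auto intro!: infsum_cong nn_integral_cmult)
  show "ennreal (\<Sum>\<^sub>\<infinity>k\<in>I. a k * \<bar>(\<integral>x. h k x \<partial>\<mu>) - (\<integral>x. h k x \<partial>\<nu>)\<bar>)
           \<le> (\<integral>\<^sup>+z. ennreal (\<Sum>\<^sub>\<infinity>k\<in>I. a k * \<bar>h k (fst z) - h k (snd z)\<bar>) \<partial>\<pi>)"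
    unfolding L R
    by (rule infsum_mono) (auto intro: nonneg_summable_on_complete intro!: mult_left_mono coupling_L1(1)[OF \<pi> h h01])
  assume ae: "\<forall>k\<in>I. (AE z in \<pi>. h k (fst z) \<le> h k (snd z)) \<or> (AE z in \<pi>. h k (snd z) \<le> h k (fst z))"
  show "(\<integral>\<^sup>+z. ennreal (\<Sum>\<^sub>\<infinity>k\<in>I. a k * \<bar>h k (fst z) - h k (snd z)\<bar>) \<partial>\<pi>)
           = ennreal (\<Sum>\<^sub>\<infinity>k\<in>I. a k * \<bar>(\<integral>x. h k x \<partial>\<mu>) - (\<integral>x. h k x \<partial>\<nu>)\<bar>)"
    unfolding L R
    by (rule infsum_cong) (use ae coupling_L1(2)[OF \<pi> h h01] in auto)
qed

lemma kantorovich_eqI: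
  assumes low: "\<And>\<pi>. \<pi> \<in> couplings M \<mu> \<nu> \<Longrightarrow> ennreal L \<le> (\<integral>\<^sup>+z. ennreal (r (fst z) (snd z)) \<partial>\<pi>)"
    and wit: "\<pi>0 \<in> couplings M \<mu> \<nu>" "(\<integral>\<^sup>+z. ennreal (r (fst z) (snd z)) \<partial>\<pi>0) = ennreal L"
    and L: "0 \<le> L"
  shows "kantorovich M r \<mu> \<nu> = L"
proof -
  have "(\<Sqinter>\<pi>\<in>couplings M \<mu> \<nu>. \<integral>\<^sup>+ z. ennreal (r (fst z) (snd z)) \<partial>\<pi>) = ennreal L"
  proof (rule antisym)
    show "(\<Sqinter>\<pi>\<in>couplings M \<mu> \<nu>. \<integral>\<^sup>+ z. ennreal (r (fst z) (snd z)) \<partial>\<pi>) \<le> ennreal L"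
      using INF_lower[OF wit(1), of "\<lambda>\<pi>. \<integral>\<^sup>+ z. ennreal (r (fst z) (snd z)) \<partial>\<pi>"] wit(2) by simp
    show "ennreal L \<le> (\<Sqinter>\<pi>\<in>couplings M \<mu> \<nu>. \<integral>\<^sup>+ z. ennreal (r (fst z) (snd z)) \<partial>\<pi>)"
      by (rule INF_greatest) (rule low)
  qed
  then show ?thesis using L by (simp add: kantorovich_def)
qed



lemma closed_support: "closed (measure_support M)"
proof -
  have "- measure_support M = \<Union>{U. open U \<and> emeasure M U = 0}"
    by (auto simp: measure_support_def)
  then show ?thesis unfolding closed_def by auto
qed

lemma support_subset_closed:
  fixes \<mu> :: "'a::topological_space measure"
  assumes "\<mu> \<in> space (prob_algebra borel)" "closed C" "emeasure \<mu> C = 1"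
  shows "measure_support \<mu> \<subseteq> C"
proof
  fix x assume x: "x \<in> measure_support \<mu>"
  interpret prob_space \<mu> using assms(1) by (simp add: space_prob_algebra)
  have sets: "sets \<mu> = sets borel" using assms(1) by (simp add: space_prob_algebra)
  have sp: "space \<mu> = UNIV" using sets_eq_imp_space_eq[OF sets] by simp
  have C: "C \<in> sets \<mu>" using sets assms(2) by auto
  have "emeasure \<mu> (space \<mu> - C) = emeasure \<mu> (space \<mu>) - emeasure \<mu> C"
    by (rule emeasure_compl[OF C]) simp
  moreover have "emeasure \<mu> UNIV = 1" using emeasure_space_1 sp by simp
  ultimately have "emeasure \<mu> (- C) = 0" using assms(3) sp by (simp add: Compl_eq_Diff_UNIV)
  moreover have "open (- C)" using assms(2) by auto
  ultimately show "x \<in> C" using x unfolding measure_support_def by auto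
qed

lemma cube_closed: "closed (cube d)"
proof -
  have "cube d = (\<Inter>k\<in>coords d. {x. 0 \<le> x k} \<inter> {x. x k \<le> 1}) \<inter> (\<Inter>k\<in>- coords d. {x. x k = 0})"
    by (auto simp: cube_def)
  moreover have "closed {x::nat\<Rightarrow>real. 0 \<le> x k}" "closed {x::nat\<Rightarrow>real. x k \<le> 1}" "closed {x::nat\<Rightarrow>real. x k = 0}" for k
    by (auto intro!: closed_Collect_le closed_Collect_eq continuous_on_const)
  ultimately show ?thesis by (auto intro!: closed_Int closed_INT)
qed

lemma cube_compact: "compact (cube d)"
proof -
  define S where "S = (\<lambda>k. if k \<in> coords d then {0..1::real} else {0})"
  have eq: "cube d = PiE UNIV S"
    by (auto simp: cube_def S_def PiE_def Pi_def)
  have "compactin (product_topology (\<lambda>_. euclidean) UNIV) (PiE UNIV S)"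
    by (subst compactin_PiE) (auto simp: S_def)
  then show ?thesis unfolding eq euclidean_product_topology by simp
qed

lemma compact_proj:
  assumes "closed S" "S \<subseteq> cube d"
  shows "closed ((\<lambda>y::nat\<Rightarrow>real. y k) ` S)"
proof -
  have "compact S" using cube_compact assms by (metis compact_Int_closed inf.absorb_iff2)
  then have "compact ((\<lambda>y::nat\<Rightarrow>real. y k) ` S)"
    by (intro compact_continuous_image continuous_on_subset[OF continuous_on_product_coordinates]) auto
  then show ?thesis by (rule compact_imp_closed)
qed

lemma proj_meas[measurable]: "(\<lambda>y::nat\<Rightarrow>real. y k) \<in> borel_measurable borel"
  by (rule borel_measurable_continuous_onI) simp



lemma int01:
  fixes f :: "'a \<Rightarrow> real"
  assumes M: "M \<in> space (prob_algebra N)" and f: "f \<in> borel_measurable N" and f0: "\<And>x. 0 \<le> f x" and f1: "\<And>x. f x \<le> 1"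
  shows "0 \<le> (\<integral>x. f x \<partial>M)" "(\<integral>x. f x \<partial>M) \<le> 1"
proof -
  interpret prob_space M using M by (simp add: space_prob_algebra)
  have "sets M = sets N" using M by (simp add: space_prob_algebra)
  then have fm: "f \<in> borel_measurable M" using f measurable_cong_sets[of M N borel borel] by simp
  show "0 \<le> (\<integral>x. f x \<partial>M)" using f0 by (intro Bochner_Integration.integral_nonneg) simp
  have "integrable M f"
  proof (rule integrable_const_bound[where B=1])
    show "AE x in M. norm (f x) \<le> 1" using f0 f1 by (intro AE_I2) (simp add: abs_le_iff)
  qed (rule fm)
  then show "(\<integral>x. f x \<partial>M) \<le> 1" by (rule integral_le_const) (simp add: f1)
qed

lemma prob_algebraD:
  assumes "N \<in> space (prob_algebra M)"
  shows "prob_space N" "sets N = sets M" "space N = space M"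
proof -
  show "prob_space N" "sets N = sets M" using assms by (simp_all add: space_prob_algebra)
  then show "space N = space M" by (metis sets_eq_imp_space_eq)
qed

primrec ff :: "(int \<Rightarrow> (nat\<Rightarrow>real) \<Rightarrow> (nat\<Rightarrow>real) measure) \<Rightarrow> nat \<Rightarrow> nat \<Rightarrow> (nat\<Rightarrow>real) \<Rightarrow> real" where
  "ff K k 0 = (\<lambda>y. clip (y k))"
| "ff K k (Suc m) = (\<lambda>x. \<integral>y. ff K k m y \<partial>(K (- int m - 1) x))"

primrec gg :: "(int \<Rightarrow> real \<Rightarrow> real measure) \<Rightarrow> nat \<Rightarrow> real \<Rightarrow> real" where
  "gg R 0 = clip"
| "gg R (Suc m) = (\<lambda>s. \<integral>t. gg R m t \<partial>(R (- int m - 1) s))"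

locale P47 =
  fixes d :: enat and a :: "nat \<Rightarrow> real"
    and \<mu> :: "int \<Rightarrow> (nat \<Rightarrow> real) measure"
    and K :: "int \<Rightarrow> (nat \<Rightarrow> real) \<Rightarrow> (nat \<Rightarrow> real) measure"
    and Q :: "nat \<Rightarrow> int \<Rightarrow> real \<Rightarrow> real measure"
  assumes d_pos: "d \<ge> 1"
    and a_pos: "\<forall>k\<in>coords d. a k > 0"
    and a_sum: "(a has_sum 1) (coords d)"
    and laws: "\<forall>n\<le>0. \<mu> n \<in> space (prob_algebra borel) \<and> emeasure (\<mu> n) (cube d) = 1"
    and kernels: "\<forall>n<0. K n \<in> measurable borel (prob_algebra borel)"
    and markov: "\<forall>n<0. \<mu> (n + 1) = bind (\<mu> n) (K n)"
    and conc: "\<forall>n<0. \<forall>x\<in>measure_support (\<mu> n).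
                 emeasure (K n x) (measure_support (\<mu> (n + 1))) = 1"
    and monotonic: "\<forall>n<0. \<exists>C. C \<in> measurable
                 (restrict_space (borel \<Otimes>\<^sub>M borel) (measure_support (\<mu> n) \<times> measure_support (\<mu> n)))
                 (prob_algebra (borel \<Otimes>\<^sub>M borel)) \<and>
               (\<forall>x\<in>measure_support (\<mu> n). \<forall>x'\<in>measure_support (\<mu> n).
                  C (x, x') \<in> couplings borel (K n x) (K n x') \<and> monotone_coupling d (C (x, x')) x x')"
    and coordinates: "\<forall>k\<in>coords d. \<forall>n<0. Q k n \<in> measurable borel (prob_algebra borel) \<and>
               (\<forall>x\<in>measure_support (\<mu> n). distr (K n x) borel (\<lambda>y. y k) = Q k n (x k))"
begin

abbreviation "I \<equiv> coords d"
definition S :: "nat \<Rightarrow> (nat \<Rightarrow> real) set" where "S m = measure_support (\<mu> (- int m))"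
abbreviation Kt :: "nat \<Rightarrow> (nat \<Rightarrow> real) \<Rightarrow> (nat \<Rightarrow> real) measure" where "Kt m \<equiv> K (- int m - 1)"
definition CC :: "nat \<Rightarrow> (nat \<Rightarrow> real) \<times> (nat \<Rightarrow> real) \<Rightarrow> ((nat \<Rightarrow> real) \<times> (nat \<Rightarrow> real)) measure" where
  "CC m = (SOME C. C \<in> measurable
                 (restrict_space (borel \<Otimes>\<^sub>M borel) (S (Suc m) \<times> S (Suc m)))
                 (prob_algebra (borel \<Otimes>\<^sub>M borel)) \<and>
               (\<forall>x\<in>S (Suc m). \<forall>x'\<in>S (Suc m).
                  C (x, x') \<in> couplings borel (Kt m x) (Kt m x') \<and> monotone_coupling d (C (x, x')) x x'))"

lemma S_Suc: "S (Suc m) = measure_support (\<mu> (- int m - 1))"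
  unfolding S_def by (rule arg_cong[where f="\<lambda>n. measure_support (\<mu> n)"]) simp

lemma CC:
  shows "CC m \<in> measurable (restrict_space (borel \<Otimes>\<^sub>M borel) (S (Suc m) \<times> S (Suc m)))
                 (prob_algebra (borel \<Otimes>\<^sub>M borel))"
    and "x \<in> S (Suc m) \<Longrightarrow> x' \<in> S (Suc m) \<Longrightarrow> CC m (x, x') \<in> couplings borel (Kt m x) (Kt m x')"
    and "x \<in> S (Suc m) \<Longrightarrow> x' \<in> S (Suc m) \<Longrightarrow> monotone_coupling d (CC m (x, x')) x x'"
proof -
  have "- int m - 1 < 0" by simp
  then have "\<exists>C. C \<in> measurable
                 (restrict_space (borel \<Otimes>\<^sub>M borel) (S (Suc m) \<times> S (Suc m)))
                 (prob_algebra (borel \<Otimes>\<^sub>M borel)) \<and>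
               (\<forall>x\<in>S (Suc m). \<forall>x'\<in>S (Suc m).
                  C (x, x') \<in> couplings borel (Kt m x) (Kt m x') \<and> monotone_coupling d (C (x, x')) x x')"
    using monotonic unfolding S_Suc by blast
  from someI_ex[OF this] show
    "CC m \<in> measurable (restrict_space (borel \<Otimes>\<^sub>M borel) (S (Suc m) \<times> S (Suc m)))
                 (prob_algebra (borel \<Otimes>\<^sub>M borel))"
    "x \<in> S (Suc m) \<Longrightarrow> x' \<in> S (Suc m) \<Longrightarrow> CC m (x, x') \<in> couplings borel (Kt m x) (Kt m x')"
    "x \<in> S (Suc m) \<Longrightarrow> x' \<in> S (Suc m) \<Longrightarrow> monotone_coupling d (CC m (x, x')) x x'"
    unfolding CC_def by blast+
qed

lemma Kt_meas[measurable]: "Kt m \<in> measurable borel (prob_algebra borel)"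
  using kernels by simp

lemma Kt_sub[measurable]: "Kt m \<in> measurable borel (subprob_algebra borel)"
  using measurable_prob_algebraD[OF Kt_meas] .

lemma Kt_space: "Kt m x \<in> space (prob_algebra borel)"
  using measurable_space[OF Kt_meas] by simp

lemma Kt_prob: "prob_space (Kt m x)" and Kt_sets[measurable_cong]: "sets (Kt m x) = sets borel"
  and Kt_spc: "space (Kt m x) = UNIV"
  using prob_algebraD[OF Kt_space] by auto

lemma Qt_meas[measurable]: "k \<in> I \<Longrightarrow> Q k (- int m - 1) \<in> measurable borel (prob_algebra borel)"
  using coordinates by simp

lemma Qt_space: "k \<in> I \<Longrightarrow> Q k (- int m - 1) s \<in> space (prob_algebra borel)"
  using measurable_space[OF Qt_meas] by simp

lemma Qt_dist: "k \<in> I \<Longrightarrow> x \<in> S (Suc m) \<Longrightarrow> distr (Kt m x) borel (\<lambda>y. y k) = Q k (- int m - 1) (x k)"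
  using coordinates unfolding S_Suc by simp

lemma S_closed: "closed (S m)"
  unfolding S_def by (rule closed_support)

lemma S_sets[measurable]: "S m \<in> sets borel"
  using S_closed by auto

lemma S_cube: "S m \<subseteq> cube d"
  unfolding S_def by (rule support_subset_closed) (use laws cube_closed in auto)

lemma S_AE: "x \<in> S (Suc m) \<Longrightarrow> AE y in Kt m x. y \<in> S m"
proof -
  assume x: "x \<in> S (Suc m)"
  interpret prob_space "Kt m x" by (rule Kt_prob)
  have "- int m - 1 < 0" by simp
  then have "emeasure (Kt m x) (measure_support (\<mu> (- int m - 1 + 1))) = 1"
    using conc x unfolding S_Suc by blast
  then have "emeasure (Kt m x) (S m) = 1" by (simp add: S_def)
  then show ?thesis
    by (subst AE_in_set_eq_1) (auto simp: emeasure_eq_measure)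
qed

lemma ff_meas[measurable]: "ff K k m \<in> borel_measurable borel"
  and ff01: "0 \<le> ff K k m x" "ff K k m x \<le> 1"
proof (induction m arbitrary: x)
  case 0
  { case 1 show ?case by simp }
  { case 2 show ?case by simp }
  { case 3 show ?case by simp }
next
  case (Suc m)
  { case 1 show ?case
      using Suc.IH(1) by (simp add: measurable_compose[OF Kt_sub integral_measurable_subprob_algebra])
  }
  { case 2 show ?case using int01(1)[OF Kt_space Suc.IH(1)] Suc.IH(2,3) by auto }
  { case 3 show ?case using int01(2)[OF Kt_space Suc.IH(1)] Suc.IH(2,3) by auto }
qed

lemma gg_meas[measurable]: "k \<in> I \<Longrightarrow> gg (Q k) m \<in> borel_measurable borel"
  and gg01: "k \<in> I \<Longrightarrow> 0 \<le> gg (Q k) m s" "k \<in> I \<Longrightarrow> gg (Q k) m s \<le> 1"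
proof -
  assume k: "k \<in> I"
  have "gg (Q k) m \<in> borel_measurable borel \<and> (\<forall>s. 0 \<le> gg (Q k) m s \<and> gg (Q k) m s \<le> 1)"
  proof (induction m)
    case 0 then show ?case by simp
  next
    case (Suc m)
    then have m: "gg (Q k) m \<in> borel_measurable borel" by simp
    show ?case
      using Suc int01[OF Qt_space[OF k] m]
      by (auto simp: measurable_compose[OF measurable_prob_algebraD[OF Qt_meas[OF k]] integral_measurable_subprob_algebra])
  qed
  then show "gg (Q k) m \<in> borel_measurable borel" "0 \<le> gg (Q k) m s" "gg (Q k) m s \<le> 1" by auto
qed

end


lemma coupling_AE:
  assumes \<pi>: "\<pi> \<in> couplings M \<mu> \<nu>" and A: "A \<in> sets M"
  shows "(AE x in \<mu>. x \<in> A) \<Longrightarrow> AE z in \<pi>. fst z \<in> A"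
    and "(AE x in \<nu>. x \<in> A) \<Longrightarrow> AE z in \<pi>. snd z \<in> A"
proof -
  note cD = couplingD[OF \<pi>]
  have fm: "fst \<in> measurable \<pi> M" "snd \<in> measurable \<pi> M"
    by (simp_all add: measurable_cong_sets[OF cD(2) refl])
  have As: "{x \<in> space M. x \<in> A} \<in> sets M" using A by auto
  show "AE z in \<pi>. fst z \<in> A" if h: "AE x in \<mu>. x \<in> A"
  proof -
    have "AE x in distr \<pi> M fst. x \<in> A" using h unfolding cD(3) .
    then show ?thesis using AE_distr_iff[OF fm(1) As] by simp
  qed
  show "AE z in \<pi>. snd z \<in> A" if h: "AE x in \<nu>. x \<in> A"
  proof -
    have "AE x in distr \<pi> M snd. x \<in> A" using h unfolding cD(4) .
    then show ?thesis using AE_distr_iff[OF fm(2) As] by simp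
  qed
qed

lemma coupling_int:
  fixes h :: "'a \<Rightarrow> real"
  assumes \<pi>: "\<pi> \<in> couplings M \<mu> \<nu>" and h[measurable]: "h \<in> borel_measurable M"
  shows "(\<integral>x. h x \<partial>\<mu>) = (\<integral>z. h (fst z) \<partial>\<pi>)" "(\<integral>x. h x \<partial>\<nu>) = (\<integral>z. h (snd z) \<partial>\<pi>)"
proof -
  note cD = couplingD[OF \<pi>]
  have [measurable_cong]: "sets \<pi> = sets (M \<Otimes>\<^sub>M M)" by (rule cD(2))
  show "(\<integral>x. h x \<partial>\<mu>) = (\<integral>z. h (fst z) \<partial>\<pi>)"
    unfolding cD(3)[symmetric] by (rule integral_distr) measurable
  show "(\<integral>x. h x \<partial>\<nu>) = (\<integral>z. h (snd z) \<partial>\<pi>)"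
    unfolding cD(4)[symmetric] by (rule integral_distr) measurable
qed

lemma coupling_mono:
  fixes h :: "'a \<Rightarrow> real"
  assumes \<pi>: "\<pi> \<in> couplings M \<mu> \<nu>" and h[measurable]: "h \<in> borel_measurable M"
    and h01: "\<And>x. 0 \<le> h x" "\<And>x. h x \<le> 1"
    and ae: "AE z in \<pi>. h (fst z) \<le> h (snd z)"
  shows "(\<integral>x. h x \<partial>\<mu>) \<le> (\<integral>x. h x \<partial>\<nu>)"
proof -
  note cD = couplingD[OF \<pi>]
  interpret prob_space \<pi> by (rule cD(1))
  have [measurable_cong]: "sets \<pi> = sets (M \<Otimes>\<^sub>M M)" by (rule cD(2))
  have intf: "integrable \<pi> (\<lambda>z. h (fst z))" "integrable \<pi> (\<lambda>z. h (snd z))"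
    by (auto intro!: integrable_const_bound[where B=1] AE_I2 simp: abs_le_iff h01)
  show ?thesis unfolding coupling_int[OF \<pi> h]
    by (rule integral_mono_AE[OF intf ae])
qed

context P47 begin

lemma a_nonneg: "k \<in> I \<Longrightarrow> 0 \<le> a k"
  using a_pos by (simp add: less_imp_le)

lemma a_summ: "a summable_on I"
  using a_sum by (rule has_sum_imp_summable)

lemma S_01: "x \<in> S m \<Longrightarrow> k \<in> I \<Longrightarrow> 0 \<le> x k \<and> x k \<le> 1"
  using S_cube by (auto simp: cube_def)

definition "HA m \<longleftrightarrow> (\<forall>x\<in>S m. \<forall>x'\<in>S m. iter_kant borel K (rho d a) m x x' = (\<Sum>\<^sub>\<infinity>k\<in>I. a k * \<bar>ff K k m x - ff K k m x'\<bar>))"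
definition "HM m \<longleftrightarrow> (\<forall>k\<in>I. \<forall>x\<in>S m. \<forall>x'\<in>S m. x k \<le> x' k \<longrightarrow> ff K k m x \<le> ff K k m x')"
definition "HG m \<longleftrightarrow> (\<forall>k\<in>I. \<forall>x\<in>S m. gg (Q k) m (x k) = ff K k m x)"
definition "HD m \<longleftrightarrow> (\<forall>k\<in>I. \<forall>x\<in>S m. \<forall>x'\<in>S m. iter_kant borel (Q k) delta m (x k) (x' k) = \<bar>ff K k m x - ff K k m x'\<bar>)"

lemma base: "HA 0" "HM 0" "HG 0" "HD 0"
proof -
  show "HA 0" unfolding HA_def
    by (auto simp: rho_def clip_id S_01 intro!: infsum_cong)
  show "HM 0" unfolding HM_def by (auto intro: clip_mono)
  show "HG 0" unfolding HG_def by simp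
  show "HD 0" unfolding HD_def by (auto simp: delta_def clip_id S_01)
qed

lemma CC_AE:
  assumes x: "x \<in> S (Suc m)" and x': "x' \<in> S (Suc m)"
  shows "AE z in CC m (x, x'). fst z \<in> S m" "AE z in CC m (x, x'). snd z \<in> S m"
  using coupling_AE[OF CC(2)[OF x x'] S_sets] S_AE[OF x] S_AE[OF x'] by auto

lemma coupling_Kt_AE:
  assumes \<pi>: "\<pi> \<in> couplings borel (Kt m x) (Kt m x')" and x: "x \<in> S (Suc m)" and x': "x' \<in> S (Suc m)"
  shows "AE z in \<pi>. fst z \<in> S m \<and> snd z \<in> S m"
  using coupling_AE[OF \<pi> S_sets] S_AE[OF x] S_AE[OF x'] by auto

lemma CC_sign:
  assumes x: "x \<in> S (Suc m)" and x': "x' \<in> S (Suc m)" and k: "k \<in> I" and HM: "HM m"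
  shows "x k \<le> x' k \<Longrightarrow> AE z in CC m (x, x'). ff K k m (fst z) \<le> ff K k m (snd z)"
    and "x' k \<le> x k \<Longrightarrow> AE z in CC m (x, x'). ff K k m (snd z) \<le> ff K k m (fst z)"
proof -
  have mc: "monotone_coupling d (CC m (x, x')) x x'" by (rule CC(3)[OF x x'])
  assume "x k \<le> x' k"
  then have "AE z in CC m (x, x'). fst z k \<le> snd z k" using mc k unfolding monotone_coupling_def by blast
  then show "AE z in CC m (x, x'). ff K k m (fst z) \<le> ff K k m (snd z)"
    using CC_AE[OF x x'] by eventually_elim (use HM k in \<open>auto simp: HM_def\<close>)
next
  have mc: "monotone_coupling d (CC m (x, x')) x x'" by (rule CC(3)[OF x x'])
  assume "x' k \<le> x k"
  then have "AE z in CC m (x, x'). snd z k \<le> fst z k" using mc k unfolding monotone_coupling_def by blast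
  then show "AE z in CC m (x, x'). ff K k m (snd z) \<le> ff K k m (fst z)"
    using CC_AE[OF x x'] by eventually_elim (use HM k in \<open>auto simp: HM_def\<close>)
qed

lemma step_M: assumes "HM m" shows "HM (Suc m)"
  unfolding HM_def
proof (intro ballI impI)
  fix k x x' assume k: "k \<in> I" and x: "x \<in> S (Suc m)" and x': "x' \<in> S (Suc m)" and le: "x k \<le> x' k"
  show "ff K k (Suc m) x \<le> ff K k (Suc m) x'"
    using coupling_mono[OF CC(2)[OF x x'] ff_meas ff01 CC_sign(1)[OF x x' k assms le]] by simp
qed

lemma step_A: assumes HA: "HA m" and HM: "HM m" shows "HA (Suc m)"
  unfolding HA_def
proof (intro ballI)
  fix x x' assume x: "x \<in> S (Suc m)" and x': "x' \<in> S (Suc m)"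
  let ?L = "\<Sum>\<^sub>\<infinity>k\<in>I. a k * \<bar>ff K k (Suc m) x - ff K k (Suc m) x'\<bar>"
  have cong: "(\<integral>\<^sup>+z. ennreal (iter_kant borel K (rho d a) m (fst z) (snd z)) \<partial>\<pi>)
      = (\<integral>\<^sup>+z. ennreal (\<Sum>\<^sub>\<infinity>k\<in>I. a k * \<bar>ff K k m (fst z) - ff K k m (snd z)\<bar>) \<partial>\<pi>)"
    if \<pi>: "\<pi> \<in> couplings borel (Kt m x) (Kt m x')" for \<pi>
  proof (rule nn_integral_cong_AE)
    show "AE z in \<pi>. ennreal (iter_kant borel K (rho d a) m (fst z) (snd z)) =
        ennreal (\<Sum>\<^sub>\<infinity>k\<in>I. a k * \<bar>ff K k m (fst z) - ff K k m (snd z)\<bar>)"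
      using coupling_Kt_AE[OF \<pi> x x'] by eventually_elim (use HA in \<open>auto simp: HA_def\<close>)
  qed
  have "kantorovich borel (iter_kant borel K (rho d a) m) (Kt m x) (Kt m x') = ?L"
  proof (rule kantorovich_eqI)
    fix \<pi> assume \<pi>: "\<pi> \<in> couplings borel (Kt m x) (Kt m x')"
    show "ennreal ?L \<le> (\<integral>\<^sup>+z. ennreal (iter_kant borel K (rho d a) m (fst z) (snd z)) \<partial>\<pi>)"
      unfolding cong[OF \<pi>] using coupling_L2(1)[OF \<pi> ff_meas ff01 a_summ a_nonneg] by simp
  next
    show "CC m (x, x') \<in> couplings borel (Kt m x) (Kt m x')" by (rule CC(2)[OF x x'])
    have sg: "\<forall>k\<in>I. (AE z in CC m (x, x'). ff K k m (fst z) \<le> ff K k m (snd z)) \<or>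
        (AE z in CC m (x, x'). ff K k m (snd z) \<le> ff K k m (fst z))"
      using CC_sign[OF x x' _ HM] by (meson linear)
    show "(\<integral>\<^sup>+z. ennreal (iter_kant borel K (rho d a) m (fst z) (snd z)) \<partial>CC m (x, x')) = ennreal ?L"
      unfolding cong[OF CC(2)[OF x x']] using coupling_L2(2)[OF CC(2)[OF x x'] ff_meas ff01 a_summ a_nonneg sg] by simp
  next
    show "0 \<le> ?L" by (rule infsum_nonneg) (simp add: a_nonneg)
  qed
  then show "iter_kant borel K (rho d a) (Suc m) x x' = ?L" by simp
qed

end


context P47 begin

lemma step_G: assumes HG: "HG m" shows "HG (Suc m)"
  unfolding HG_def
proof (intro ballI)
  fix k x assume k: "k \<in> I" and x: "x \<in> S (Suc m)"
  have "gg (Q k) (Suc m) (x k) = (\<integral>t. gg (Q k) m t \<partial>(Q k (- int m - 1) (x k)))" by simp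
  also have "\<dots> = (\<integral>t. gg (Q k) m t \<partial>(distr (Kt m x) borel (\<lambda>y. y k)))"
    by (simp add: Qt_dist[OF k x])
  also have "\<dots> = (\<integral>y. gg (Q k) m (y k) \<partial>Kt m x)"
    by (rule integral_distr) (simp_all add: gg_meas[OF k])
  also have "\<dots> = (\<integral>y. ff K k m y \<partial>Kt m x)"
  proof (rule integral_cong_AE)
    show "AE y in Kt m x. gg (Q k) m (y k) = ff K k m y"
      using S_AE[OF x] by eventually_elim (use HG k in \<open>auto simp: HG_def\<close>)
  next
    have [measurable]: "gg (Q k) m \<in> borel_measurable borel" by (rule gg_meas[OF k])
    show "(\<lambda>y. gg (Q k) m (y k)) \<in> borel_measurable (Kt m x)" by measurable
  next
    show "ff K k m \<in> borel_measurable (Kt m x)" by measurable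
  qed
  also have "\<dots> = ff K k (Suc m) x" by simp
  finally show "gg (Q k) (Suc m) (x k) = ff K k (Suc m) x" .
qed

lemma step_D: assumes HD: "HD m" and HG: "HG m" and HM: "HM m" shows "HD (Suc m)"
  unfolding HD_def
proof (intro ballI)
  fix k x x' assume k: "k \<in> I" and x: "x \<in> S (Suc m)" and x': "x' \<in> S (Suc m)"
  define T where "T = (\<lambda>y::nat\<Rightarrow>real. y k) ` S m"
  have Tc: "closed T" unfolding T_def by (rule compact_proj[OF S_closed S_cube])
  then have Ts[measurable]: "T \<in> sets borel" by auto
  have onT: "iter_kant borel (Q k) delta m s t = \<bar>gg (Q k) m s - gg (Q k) m t\<bar>" if sT: "s \<in> T" and tT: "t \<in> T" for s t
  proof -
    obtain y where y1: "y \<in> S m" "s = y k"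
      using sT unfolding T_def by blast
    obtain y' where y2: "y' \<in> S m" "t = y' k"
      using tT unfolding T_def by blast
    have y: "y \<in> S m" "y' \<in> S m" and st: "s = y k" "t = y' k" using y1 y2 by auto
    show ?thesis using HD HG k y unfolding st HD_def HG_def by auto
  qed
  let ?Q = "Q k (- int m - 1)"
  have Qx: "?Q (x k) = distr (Kt m x) borel (\<lambda>y. y k)" "?Q (x' k) = distr (Kt m x') borel (\<lambda>y. y k)"
    using Qt_dist[OF k x] Qt_dist[OF k x'] by simp_all
  have AET: "AE s in ?Q (z k). s \<in> T" if z: "z \<in> S (Suc m)" for z
  proof -
    have "AE y in Kt m z. y k \<in> T" using S_AE[OF z] by eventually_elim (auto simp: T_def)
    then show ?thesis unfolding Qt_dist[OF k z, symmetric]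
      by (subst AE_distr_iff) auto
  qed
  have HGS: "HG (Suc m)" by (rule step_G[OF HG])
  have intQ: "(\<integral>t. gg (Q k) m t \<partial>?Q (z k)) = ff K k (Suc m) z" if z: "z \<in> S (Suc m)" for z
    using HGS k z unfolding HG_def by simp
  let ?L = "\<bar>ff K k (Suc m) x - ff K k (Suc m) x'\<bar>"
  have cong: "(\<integral>\<^sup>+z. ennreal (iter_kant borel (Q k) delta m (fst z) (snd z)) \<partial>\<pi>)
      = (\<integral>\<^sup>+z. ennreal \<bar>gg (Q k) m (fst z) - gg (Q k) m (snd z)\<bar> \<partial>\<pi>)"
    if \<pi>: "\<pi> \<in> couplings borel (?Q (x k)) (?Q (x' k))" for \<pi>
  proof (rule nn_integral_cong_AE)
    show "AE z in \<pi>. ennreal (iter_kant borel (Q k) delta m (fst z) (snd z)) =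
        ennreal \<bar>gg (Q k) m (fst z) - gg (Q k) m (snd z)\<bar>"
      using coupling_AE(1)[OF \<pi> Ts AET[OF x]] coupling_AE(2)[OF \<pi> Ts AET[OF x']]
      by eventually_elim (simp add: onT)
  qed
  define C where "C = CC m (x, x')"
  have Cc: "C \<in> couplings borel (Kt m x) (Kt m x')" unfolding C_def by (rule CC(2)[OF x x'])
  note cD = couplingD[OF Cc]
  have [measurable_cong]: "sets C = sets (borel \<Otimes>\<^sub>M borel)" by (rule cD(2))
  have mp[measurable]: "(\<lambda>z. (fst z k, snd z k)) \<in> measurable C (borel \<Otimes>\<^sub>M borel)" by measurable
  define \<pi>0 where "\<pi>0 = distr C (borel \<Otimes>\<^sub>M borel) (\<lambda>z::(nat\<Rightarrow>real)\<times>(nat\<Rightarrow>real). (fst z k, snd z k))"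
  have p0: "\<pi>0 \<in> couplings borel (?Q (x k)) (?Q (x' k))"
    unfolding couplings_def
  proof (intro CollectI conjI)
    show "\<pi>0 \<in> space (prob_algebra (borel \<Otimes>\<^sub>M borel))"
      unfolding \<pi>0_def space_prob_algebra
      using prob_space.prob_space_distr[OF cD(1) mp] by simp
    have "distr \<pi>0 borel fst = distr C borel (fst \<circ> (\<lambda>z. (fst z k, snd z k)))"
      unfolding \<pi>0_def by (rule distr_distr) simp_all
    also have "\<dots> = distr (distr C borel fst) borel (\<lambda>y. y k)"
      by (subst distr_distr) (simp_all add: comp_def)
    also have "\<dots> = ?Q (x k)" using cD(3) Qx(1) by simp
    finally show "distr \<pi>0 borel fst = ?Q (x k)" .
    have "distr \<pi>0 borel snd = distr C borel (snd \<circ> (\<lambda>z. (fst z k, snd z k)))"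
      unfolding \<pi>0_def by (rule distr_distr) simp_all
    also have "\<dots> = distr (distr C borel snd) borel (\<lambda>y. y k)"
      by (subst distr_distr) (simp_all add: comp_def)
    also have "\<dots> = ?Q (x' k)" using cD(4) Qx(2) by simp
    finally show "distr \<pi>0 borel snd = ?Q (x' k)" .
  qed
  have ggm[measurable]: "gg (Q k) m \<in> borel_measurable borel" by (rule gg_meas[OF k])
  have sign: "(AE z in \<pi>0. gg (Q k) m (fst z) \<le> gg (Q k) m (snd z)) \<or>
              (AE z in \<pi>0. gg (Q k) m (snd z) \<le> gg (Q k) m (fst z))"
  proof -
    have mc: "monotone_coupling d C x x'" unfolding C_def by (rule CC(3)[OF x x'])
    have AS: "AE z in C. fst z \<in> S m" "AE z in C. snd z \<in> S m"
      using CC_AE[OF x x'] unfolding C_def by auto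
    show ?thesis
    proof (cases "x k \<le> x' k")
      case True
      then have "AE z in C. fst z k \<le> snd z k" using mc k unfolding monotone_coupling_def by blast
      then have "AE z in C. gg (Q k) m (fst z k) \<le> gg (Q k) m (snd z k)"
        using AS by eventually_elim (use HG HM k in \<open>auto simp: HG_def HM_def\<close>)
      then have "AE z in \<pi>0. gg (Q k) m (fst z) \<le> gg (Q k) m (snd z)"
        unfolding \<pi>0_def by (subst AE_distr_iff) auto
      then show ?thesis ..
    next
      case False
      then have "x' k \<le> x k" by simp
      then have "AE z in C. snd z k \<le> fst z k" using mc k unfolding monotone_coupling_def by blast
      then have "AE z in C. gg (Q k) m (snd z k) \<le> gg (Q k) m (fst z k)"
        using AS by eventually_elim (use HG HM k in \<open>auto simp: HG_def HM_def\<close>)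
      then have "AE z in \<pi>0. gg (Q k) m (snd z) \<le> gg (Q k) m (fst z)"
        unfolding \<pi>0_def by (subst AE_distr_iff) auto
      then show ?thesis ..
    qed
  qed
  have "kantorovich borel (iter_kant borel (Q k) delta m) (?Q (x k)) (?Q (x' k)) = ?L"
  proof (rule kantorovich_eqI)
    fix \<pi> assume \<pi>: "\<pi> \<in> couplings borel (?Q (x k)) (?Q (x' k))"
    show "ennreal ?L \<le> (\<integral>\<^sup>+z. ennreal (iter_kant borel (Q k) delta m (fst z) (snd z)) \<partial>\<pi>)"
      unfolding cong[OF \<pi>] using coupling_L1(1)[OF \<pi> ggm gg01[OF k]] intQ[OF x] intQ[OF x'] by simp
  next
    show "\<pi>0 \<in> couplings borel (?Q (x k)) (?Q (x' k))" by (rule p0)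
    show "(\<integral>\<^sup>+z. ennreal (iter_kant borel (Q k) delta m (fst z) (snd z)) \<partial>\<pi>0) = ennreal ?L"
      unfolding cong[OF p0] using coupling_L1(2)[OF p0 ggm gg01[OF k] sign] intQ[OF x] intQ[OF x'] by simp
  qed simp
  then show "iter_kant borel (Q k) delta (Suc m) (x k) (x' k) = ?L" by simp
qed

lemma main: "HA m \<and> HM m \<and> HG m \<and> HD m"
proof (induction m)
  case 0 then show ?case using base by simp
next
  case (Suc m) then show ?case using step_A step_M step_G step_D by blast
qed

end


context P47 begin

lemma L_meas[measurable]: "law_to_0 borel K m \<in> measurable borel (prob_algebra borel)"
proof (induction m)
  case 0
  have "(\<lambda>z. return borel z) = return borel" by (rule ext) simp
  then show ?case by simp
next
  case (Suc m)
  show ?case using measurable_bind_prob_space[OF Kt_meas Suc] by simp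
qed

lemma L_sub[measurable]: "law_to_0 borel K m \<in> measurable borel (subprob_algebra borel)"
  by (rule measurable_prob_algebraD[OF L_meas])

lemma L_space: "law_to_0 borel K m x \<in> space (prob_algebra borel)"
  using measurable_space[OF L_meas] by simp

lemma L_AE: "x \<in> S m \<Longrightarrow> AE z in law_to_0 borel K m x. z \<in> S 0"
proof (induction m arbitrary: x)
  case 0
  then show ?case unfolding law_to_0.simps by (subst AE_return) auto
next
  case (Suc m)
  have ae: "AE y in Kt m x. AE z in law_to_0 borel K m y. z \<in> S 0"
    using S_AE[OF Suc.prems] by eventually_elim (rule Suc.IH)
  have Lx: "law_to_0 borel K m \<in> measurable (Kt m x) (subprob_algebra borel)"
    using L_sub by (simp add: measurable_cong_sets[OF Kt_sets refl])
  have pr: "Measurable.pred borel (\<lambda>z. z \<in> S 0)" by measurable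
  show ?case unfolding law_to_0.simps using AE_bind[OF Lx pr] ae by simp
qed

lemma L_int: "(\<integral>z. clip (z k) \<partial>law_to_0 borel K m x) = ff K k m x"
proof (induction m arbitrary: x)
  case 0
  then show ?case by (simp add: integral_return)
next
  case (Suc m)
  interpret prob_space "Kt m x" by (rule Kt_prob)
  have "(\<integral>z. clip (z k) \<partial>law_to_0 borel K (Suc m) x) = (\<integral>z. clip (z k) \<partial>(Kt m x \<bind> law_to_0 borel K m))"
    by simp
  also have "\<dots> = (\<integral>y. (\<integral>z. clip (z k) \<partial>law_to_0 borel K m y) \<partial>Kt m x)"
  proof (rule integral_bind[where B=1 and B'=1])
    show "(\<lambda>z. clip (z k)) \<in> borel_measurable borel" by measurable
    show "\<bar>clip (z k)\<bar> \<le> 1" for z by simp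
    show "law_to_0 borel K m \<in> measurable (Kt m x) (subprob_algebra borel)"
      using L_sub by (simp add: measurable_cong_sets[OF Kt_sets refl])
    show "finite_measure (Kt m x)" by unfold_locales
    show "AE y in Kt m x. emeasure (law_to_0 borel K m y) (space (law_to_0 borel K m y)) \<le> ennreal 1"
      using prob_algebraD(1)[OF L_space] by (simp add: prob_space.emeasure_space_1)
  qed
  also have "\<dots> = ff K k (Suc m) x" using Suc.IH by simp
  finally show ?case .
qed

primrec PP :: "nat \<Rightarrow> (nat \<Rightarrow> real) \<times> (nat \<Rightarrow> real) \<Rightarrow> ((nat \<Rightarrow> real) \<times> (nat \<Rightarrow> real)) measure" where
  "PP 0 = (\<lambda>p. return (borel \<Otimes>\<^sub>M borel) p)"
| "PP (Suc m) = (\<lambda>p. bind (CC m p) (\<lambda>q. if q \<in> S m \<times> S m then PP m q else return (borel \<Otimes>\<^sub>M borel) q))"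

lemma SS_sets[measurable]: "S m \<times> S m \<in> sets (borel \<Otimes>\<^sub>M borel)"
  by (rule pair_measureI) simp_all

lemma PP_meas: "PP m \<in> measurable (restrict_space (borel \<Otimes>\<^sub>M borel) (S m \<times> S m)) (prob_algebra (borel \<Otimes>\<^sub>M borel))"
  and E_meas: "(\<lambda>q. if q \<in> S m \<times> S m then PP m q else return (borel \<Otimes>\<^sub>M borel) q)
      \<in> measurable (borel \<Otimes>\<^sub>M borel) (prob_algebra (borel \<Otimes>\<^sub>M borel))"
proof -
  have E: "(\<lambda>q. if q \<in> S m \<times> S m then PP m q else return (borel \<Otimes>\<^sub>M borel) q)
      \<in> measurable (borel \<Otimes>\<^sub>M borel) (prob_algebra (borel \<Otimes>\<^sub>M borel))"
    if P: "PP m \<in> measurable (restrict_space (borel \<Otimes>\<^sub>M borel) (S m \<times> S m)) (prob_algebra (borel \<Otimes>\<^sub>M borel))" for m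
  proof (subst measurable_If_restrict_space_iff)
    show "{x \<in> space (borel \<Otimes>\<^sub>M borel). x \<in> S m \<times> S m} \<in> sets (borel \<Otimes>\<^sub>M borel)"
      using SS_sets[of m] by (simp add: space_pair_measure)
    show "PP m \<in> restrict_space (borel \<Otimes>\<^sub>M borel) {x. x \<in> S m \<times> S m} \<rightarrow>\<^sub>M prob_algebra (borel \<Otimes>\<^sub>M borel) \<and>
      return (borel \<Otimes>\<^sub>M borel) \<in> restrict_space (borel \<Otimes>\<^sub>M borel) {x. x \<notin> S m \<times> S m} \<rightarrow>\<^sub>M prob_algebra (borel \<Otimes>\<^sub>M borel)"
      using P by (simp add: measurable_restrict_space1[OF measurable_return_prob_space])
  qed
  have "PP m \<in> measurable (restrict_space (borel \<Otimes>\<^sub>M borel) (S m \<times> S m)) (prob_algebra (borel \<Otimes>\<^sub>M borel))"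
  proof (induction m)
    case 0
    have "(\<lambda>p. return (borel \<Otimes>\<^sub>M borel) p) = return (borel \<Otimes>\<^sub>M borel)" by (rule ext) simp
    then show ?case by (simp add: measurable_restrict_space1[OF measurable_return_prob_space])
  next
    case (Suc m)
    show ?case using measurable_bind_prob_space[OF CC(1) E[OF Suc]] by simp
  qed
  then show "PP m \<in> measurable (restrict_space (borel \<Otimes>\<^sub>M borel) (S m \<times> S m)) (prob_algebra (borel \<Otimes>\<^sub>M borel))"
    and "(\<lambda>q. if q \<in> S m \<times> S m then PP m q else return (borel \<Otimes>\<^sub>M borel) q)
      \<in> measurable (borel \<Otimes>\<^sub>M borel) (prob_algebra (borel \<Otimes>\<^sub>M borel))" using E by auto
qed

end


lemma fstk[measurable]: "(\<lambda>z::(nat\<Rightarrow>real)\<times>(nat\<Rightarrow>real). fst z k) \<in> borel_measurable (borel \<Otimes>\<^sub>M borel)"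
  by (rule measurable_compose[OF measurable_fst proj_meas])
lemma sndk[measurable]: "(\<lambda>z::(nat\<Rightarrow>real)\<times>(nat\<Rightarrow>real). snd z k) \<in> borel_measurable (borel \<Otimes>\<^sub>M borel)"
  by (rule measurable_compose[OF measurable_snd proj_meas])

context P47 begin

lemma E_sub: "(\<lambda>q. if q \<in> S m \<times> S m then PP m q else return (borel \<Otimes>\<^sub>M borel) q)
      \<in> measurable (borel \<Otimes>\<^sub>M borel) (subprob_algebra (borel \<Otimes>\<^sub>M borel))"
  by (rule measurable_prob_algebraD[OF E_meas])

definition "HP m \<longleftrightarrow> (\<forall>x\<in>S m. \<forall>x'\<in>S m. PP m (x, x') \<in> couplings borel (law_to_0 borel K m x) (law_to_0 borel K m x') \<and>
   (\<forall>k\<in>I. (x k \<le> x' k \<longrightarrow> (AE z in PP m (x, x'). fst z k \<le> snd z k)) \<and>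
           (x' k \<le> x k \<longrightarrow> (AE z in PP m (x, x'). snd z k \<le> fst z k))))"

lemma HP0: "HP 0"
  unfolding HP_def
proof (intro ballI conjI impI)
  fix x x' assume x: "x \<in> S 0" and x': "x' \<in> S 0"
  have sp: "(x, x') \<in> space (borel \<Otimes>\<^sub>M borel)" by (simp add: space_pair_measure)
  show "PP 0 (x, x') \<in> couplings borel (law_to_0 borel K 0 x) (law_to_0 borel K 0 x')"
    unfolding couplings_def
  proof (intro CollectI conjI)
    show "PP 0 (x, x') \<in> space (prob_algebra (borel \<Otimes>\<^sub>M borel))"
      using measurable_space[OF measurable_return_prob_space sp] by simp
    show "distr (PP 0 (x, x')) borel fst = law_to_0 borel K 0 x"
      by (simp add: distr_return[OF measurable_fst sp])
    show "distr (PP 0 (x, x')) borel snd = law_to_0 borel K 0 x'"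
      by (simp add: distr_return[OF measurable_snd sp])
  qed
  fix k :: nat
  have pr1: "Measurable.pred (borel \<Otimes>\<^sub>M borel) (\<lambda>z. (fst z k::real) \<le> snd z k)"
    unfolding Measurable.pred_def by (rule borel_measurable_le[OF fstk sndk])
  have pr2: "Measurable.pred (borel \<Otimes>\<^sub>M borel) (\<lambda>z. (snd z k::real) \<le> fst z k)"
    unfolding Measurable.pred_def by (rule borel_measurable_le[OF sndk fstk])
  show "x k \<le> x' k \<Longrightarrow> AE z in PP 0 (x, x'). fst z k \<le> snd z k"
    unfolding PP.simps using AE_return[OF sp pr1] by simp
  show "x' k \<le> x k \<Longrightarrow> AE z in PP 0 (x, x'). snd z k \<le> fst z k"
    unfolding PP.simps using AE_return[OF sp pr2] by simp
qed

lemma HP_Suc: assumes HP: "HP m" shows "HP (Suc m)"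
  unfolding HP_def
proof (intro ballI conjI impI)
  fix x x' assume x: "x \<in> S (Suc m)" and x': "x' \<in> S (Suc m)"
  define C where "C = CC m (x, x')"
  define E where "E = (\<lambda>q. if q \<in> S m \<times> S m then PP m q else return (borel \<Otimes>\<^sub>M borel) q)"
  have PPS: "PP (Suc m) (x, x') = bind C E" by (simp add: C_def E_def)
  have Cc: "C \<in> couplings borel (Kt m x) (Kt m x')" unfolding C_def by (rule CC(2)[OF x x'])
  note cD = couplingD[OF Cc]
  have [measurable_cong]: "sets C = sets (borel \<Otimes>\<^sub>M borel)" by (rule cD(2))
  have sC: "space C \<noteq> {}" using prob_space.not_empty[OF cD(1)] .
  have EC: "E \<in> measurable C (subprob_algebra (borel \<Otimes>\<^sub>M borel))"
    using E_sub unfolding E_def by (simp add: measurable_cong_sets[OF cD(2) refl])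
  have AS: "AE q in C. q \<in> S m \<times> S m"
    using CC_AE[OF x x'] unfolding C_def by eventually_elim auto
  have marg: "distr (bind C E) borel f = law_to_0 borel K (Suc m) y"
    if f: "f = fst \<and> y = x \<or> f = snd \<and> y = x'" for f y
  proof -
    have fm[measurable]: "f \<in> measurable (borel \<Otimes>\<^sub>M borel) borel" using f by auto
    have fmC: "f \<in> measurable C borel" by (simp add: measurable_cong_sets[OF cD(2) refl])
    have "distr (bind C E) borel f = bind C (\<lambda>q. distr (E q) borel f)"
      by (rule distr_bind[OF EC sC fm])
    also have "\<dots> = bind C (\<lambda>q. law_to_0 borel K m (f q))"
    proof (rule bind_cong_AE[where B=borel])
      show "(\<lambda>q. distr (E q) borel f) \<in> measurable C (subprob_algebra borel)"
        by (rule measurable_compose[OF EC measurable_distr[OF fm]])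
      show "(\<lambda>q. law_to_0 borel K m (f q)) \<in> measurable C (subprob_algebra borel)"
        by (rule measurable_compose[OF fmC L_sub])
      show "AE q in C. distr (E q) borel f = law_to_0 borel K m (f q)"
        using AS
      proof eventually_elim
        case (elim q)
        then obtain q1 q2 where q: "q = (q1, q2)" "q1 \<in> S m" "q2 \<in> S m" by auto
        then have "PP m q \<in> couplings borel (law_to_0 borel K m q1) (law_to_0 borel K m q2)"
          using HP unfolding HP_def by auto
        then show ?case using f q elim unfolding E_def couplings_def by auto
      qed
    qed simp
    also have "\<dots> = bind (distr C borel f) (law_to_0 borel K m)"
      by (rule bind_distr[OF fmC L_sub sC, symmetric])
    also have "\<dots> = law_to_0 borel K (Suc m) y" using f cD(3,4) by auto
    finally show ?thesis .
  qed
  show "PP (Suc m) (x, x') \<in> couplings borel (law_to_0 borel K (Suc m) x) (law_to_0 borel K (Suc m) x')"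
    unfolding couplings_def
  proof (intro CollectI conjI)
    have "(x, x') \<in> space (restrict_space (borel \<Otimes>\<^sub>M borel) (S (Suc m) \<times> S (Suc m)))"
      using x x' by (simp add: space_restrict_space space_pair_measure)
    then show "PP (Suc m) (x, x') \<in> space (prob_algebra (borel \<Otimes>\<^sub>M borel))"
      by (rule measurable_space[OF PP_meas])
    show "distr (PP (Suc m) (x, x')) borel fst = law_to_0 borel K (Suc m) x"
      unfolding PPS by (rule marg) simp
    show "distr (PP (Suc m) (x, x')) borel snd = law_to_0 borel K (Suc m) x'"
      unfolding PPS by (rule marg) simp
  qed
  have mc: "monotone_coupling d C x x'" unfolding C_def by (rule CC(3)[OF x x'])
  fix k assume k: "k \<in> I"
  have pr1: "Measurable.pred (borel \<Otimes>\<^sub>M borel) (\<lambda>z. (fst z k::real) \<le> snd z k)"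
    unfolding Measurable.pred_def by (rule borel_measurable_le[OF fstk sndk])
  have pr2: "Measurable.pred (borel \<Otimes>\<^sub>M borel) (\<lambda>z. (snd z k::real) \<le> fst z k)"
    unfolding Measurable.pred_def by (rule borel_measurable_le[OF sndk fstk])
  show "AE z in PP (Suc m) (x, x'). fst z k \<le> snd z k" if le: "x k \<le> x' k"
  proof -
    have "AE q in C. fst q k \<le> snd q k" using mc k le unfolding monotone_coupling_def by blast
    then have "AE q in C. AE z in E q. fst z k \<le> snd z k"
      using AS
    proof eventually_elim
      case (elim q)
      then obtain q1 q2 where q: "q = (q1, q2)" "q1 \<in> S m" "q2 \<in> S m" by auto
      then show ?case using HP k elim unfolding HP_def E_def by auto
    qed
    then show ?thesis unfolding PPS using AE_bind[OF EC pr1] by simp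
  qed
  show "AE z in PP (Suc m) (x, x'). snd z k \<le> fst z k" if le: "x' k \<le> x k"
  proof -
    have "AE q in C. snd q k \<le> fst q k" using mc k le unfolding monotone_coupling_def by blast
    then have "AE q in C. AE z in E q. snd z k \<le> fst z k"
      using AS
    proof eventually_elim
      case (elim q)
      then obtain q1 q2 where q: "q = (q1, q2)" "q1 \<in> S m" "q2 \<in> S m" by auto
      then show ?case using HP k elim unfolding HP_def E_def by auto
    qed
    then show ?thesis unfolding PPS using AE_bind[OF EC pr2] by simp
  qed
qed

lemma HP: "HP m"
  by (induction m) (auto intro: HP0 HP_Suc)

end


context P47 begin

lemma clipk[measurable]: "(\<lambda>z::nat\<Rightarrow>real. clip (z k)) \<in> borel_measurable borel"
  by (rule measurable_compose[OF proj_meas clip_meas])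

lemma rho_S0: "y \<in> S 0 \<Longrightarrow> y' \<in> S 0 \<Longrightarrow>
    rho d a y y' = (\<Sum>\<^sub>\<infinity>k\<in>I. a k * \<bar>clip (y k) - clip (y' k)\<bar>)"
  unfolding rho_def by (rule infsum_cong) (simp add: clip_id S_01)

lemma law_kant:
  assumes x: "x \<in> S m" and x': "x' \<in> S m"
  shows "kantorovich borel (rho d a) (law_to_0 borel K m x) (law_to_0 borel K m x') =
    (\<Sum>\<^sub>\<infinity>k\<in>I. a k * \<bar>ff K k m x - ff K k m x'\<bar>)"
proof -
  let ?L = "\<Sum>\<^sub>\<infinity>k\<in>I. a k * \<bar>ff K k m x - ff K k m x'\<bar>"
  have hm: "\<And>k. (\<lambda>z::nat\<Rightarrow>real. clip (z k)) \<in> borel_measurable borel" by (rule clipk)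
  have h01: "\<And>k z. 0 \<le> clip ((z::nat\<Rightarrow>real) k)" "\<And>k z. clip ((z::nat\<Rightarrow>real) k) \<le> 1" by simp_all
  have cong: "(\<integral>\<^sup>+z. ennreal (rho d a (fst z) (snd z)) \<partial>\<pi>)
      = (\<integral>\<^sup>+z. ennreal (\<Sum>\<^sub>\<infinity>k\<in>I. a k * \<bar>clip (fst z k) - clip (snd z k)\<bar>) \<partial>\<pi>)"
    if \<pi>: "\<pi> \<in> couplings borel (law_to_0 borel K m x) (law_to_0 borel K m x')" for \<pi>
  proof (rule nn_integral_cong_AE)
    show "AE z in \<pi>. ennreal (rho d a (fst z) (snd z)) =
        ennreal (\<Sum>\<^sub>\<infinity>k\<in>I. a k * \<bar>clip (fst z k) - clip (snd z k)\<bar>)"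
      using coupling_AE(1)[OF \<pi> S_sets L_AE[OF x]] coupling_AE(2)[OF \<pi> S_sets L_AE[OF x']]
      by eventually_elim (simp add: rho_S0)
  qed
  have ints: "(\<integral>z. clip (z k) \<partial>law_to_0 borel K m y) = ff K k m y" for k y by (rule L_int)
  show ?thesis
  proof (rule kantorovich_eqI)
    fix \<pi> assume \<pi>: "\<pi> \<in> couplings borel (law_to_0 borel K m x) (law_to_0 borel K m x')"
    show "ennreal ?L \<le> (\<integral>\<^sup>+z. ennreal (rho d a (fst z) (snd z)) \<partial>\<pi>)"
    proof -
      have "ennreal (\<Sum>\<^sub>\<infinity>k\<in>I. a k * \<bar>(\<integral>z. clip (z k) \<partial>law_to_0 borel K m x) - (\<integral>z. clip (z k) \<partial>law_to_0 borel K m x')\<bar>)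
         \<le> (\<integral>\<^sup>+z. ennreal (\<Sum>\<^sub>\<infinity>k\<in>I. a k * \<bar>clip (fst z k) - clip (snd z k)\<bar>) \<partial>\<pi>)"
        by (rule coupling_L2(1)[where h="\<lambda>k z. clip (z k)" and M=borel]) (simp_all add: \<pi> a_summ a_nonneg)
      then show ?thesis unfolding cong[OF \<pi>] by (simp add: ints)
    qed
  next
    have HPm: "HP m" by (rule HP)
    then have p: "PP m (x, x') \<in> couplings borel (law_to_0 borel K m x) (law_to_0 borel K m x')"
      using x x' unfolding HP_def by blast
    then show "PP m (x, x') \<in> couplings borel (law_to_0 borel K m x) (law_to_0 borel K m x')" .
    have sg: "\<forall>k\<in>I. (AE z in PP m (x, x'). clip (fst z k) \<le> clip (snd z k)) \<or>
        (AE z in PP m (x, x'). clip (snd z k) \<le> clip (fst z k))"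
    proof
      fix k assume k: "k \<in> I"
      show "(AE z in PP m (x, x'). clip (fst z k) \<le> clip (snd z k)) \<or>
        (AE z in PP m (x, x'). clip (snd z k) \<le> clip (fst z k))"
      proof (cases "x k \<le> x' k")
        case True
        then have "AE z in PP m (x, x'). fst z k \<le> snd z k" using HPm x x' k unfolding HP_def by blast
        then have "AE z in PP m (x, x'). clip (fst z k) \<le> clip (snd z k)"
          by eventually_elim (rule clip_mono)
        then show ?thesis ..
      next
        case False
        then have "x' k \<le> x k" by simp
        then have "AE z in PP m (x, x'). snd z k \<le> fst z k" using HPm x x' k unfolding HP_def by blast
        then have "AE z in PP m (x, x'). clip (snd z k) \<le> clip (fst z k)"
          by eventually_elim (rule clip_mono)
        then show ?thesis ..
      qed
    qed
    show "(\<integral>\<^sup>+z. ennreal (rho d a (fst z) (snd z)) \<partial>PP m (x, x')) = ennreal ?L"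
    proof -
      have "(\<integral>\<^sup>+z. ennreal (\<Sum>\<^sub>\<infinity>k\<in>I. a k * \<bar>clip (fst z k) - clip (snd z k)\<bar>) \<partial>PP m (x, x')) =
        ennreal (\<Sum>\<^sub>\<infinity>k\<in>I. a k * \<bar>(\<integral>z. clip (z k) \<partial>law_to_0 borel K m x) - (\<integral>z. clip (z k) \<partial>law_to_0 borel K m x')\<bar>)"
        by (rule coupling_L2(2)[where h="\<lambda>k z. clip (z k)" and M=borel]) (simp_all add: p a_summ a_nonneg sg)
      then show ?thesis unfolding cong[OF p] by (simp add: ints)
    qed
  next
    show "0 \<le> ?L" by (rule infsum_nonneg) (simp add: a_nonneg)
  qed
qed

lemma final:
  "\<forall>n\<le>-1. \<forall>x\<in>measure_support (\<mu> n). \<forall>x'\<in>measure_support (\<mu> n).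
           iterated_kantorovich borel K (rho d a) n x x' =
             kantorovich borel (rho d a) (cond_law_X0 borel K n x) (cond_law_X0 borel K n x') \<and>
           iterated_kantorovich borel K (rho d a) n x x' =
             (\<Sum>\<^sub>\<infinity>k\<in>coords d. a k * iterated_kantorovich borel (Q k) delta n (x k) (x' k))"
proof (intro allI impI ballI)
  fix n :: int and x x' assume n: "n \<le> -1" and x0: "x \<in> measure_support (\<mu> n)" and x0': "x' \<in> measure_support (\<mu> n)"
  define m where "m = nat (- n)"
  have nm: "n = - int m" using n by (simp add: m_def)
  have x: "x \<in> S m" and x': "x' \<in> S m" using x0 x0' by (simp_all add: S_def nm)
  have ik: "iterated_kantorovich M R r0 n = iter_kant M R r0 m" for M R r0
    by (simp add: iterated_kantorovich_def m_def)
  have cl: "cond_law_X0 borel K n = law_to_0 borel K m"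
    by (simp add: fun_eq_iff cond_law_X0_def m_def)
  have mm: "HA m" "HD m" using main by auto
  have eA: "iter_kant borel K (rho d a) m x x' = (\<Sum>\<^sub>\<infinity>k\<in>I. a k * \<bar>ff K k m x - ff K k m x'\<bar>)"
    using mm(1) x x' unfolding HA_def by blast
  show "iterated_kantorovich borel K (rho d a) n x x' =
             kantorovich borel (rho d a) (cond_law_X0 borel K n x) (cond_law_X0 borel K n x') \<and>
           iterated_kantorovich borel K (rho d a) n x x' =
             (\<Sum>\<^sub>\<infinity>k\<in>coords d. a k * iterated_kantorovich borel (Q k) delta n (x k) (x' k))"
  proof
    show "iterated_kantorovich borel K (rho d a) n x x' =
             kantorovich borel (rho d a) (cond_law_X0 borel K n x) (cond_law_X0 borel K n x')"
      unfolding ik cl eA law_kant[OF x x'] ..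
    show "iterated_kantorovich borel K (rho d a) n x x' =
             (\<Sum>\<^sub>\<infinity>k\<in>coords d. a k * iterated_kantorovich borel (Q k) delta n (x k) (x' k))"
      unfolding ik eA using mm(2) x x' unfolding HD_def by (auto intro!: infsum_cong)
  qed
qed

end

theorem proposition4p7:
  fixes d :: enat and a :: "nat \<Rightarrow> real"
    and \<mu> :: "int \<Rightarrow> (nat \<Rightarrow> real) measure"
    and K :: "int \<Rightarrow> (nat \<Rightarrow> real) \<Rightarrow> (nat \<Rightarrow> real) measure"
    and Q :: "nat \<Rightarrow> int \<Rightarrow> real \<Rightarrow> real measure"
  assumes d_pos: "d \<ge> 1"
    and a_pos: "\<forall>k\<in>coords d. a k > 0"
    and a_sum: "(a has_sum 1) (coords d)"
    and laws: "\<forall>n\<le>0. \<mu> n \<in> space (prob_algebra borel) \<and> emeasure (\<mu> n) (cube d) = 1"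
    and kernels: "\<forall>n<0. K n \<in> measurable borel (prob_algebra borel)"
    and markov: "\<forall>n<0. \<mu> (n + 1) = bind (\<mu> n) (K n)"
    and conc: "\<forall>n<0. \<forall>x\<in>measure_support (\<mu> n).
                 emeasure (K n x) (measure_support (\<mu> (n + 1))) = 1"
    and monotonic: "\<forall>n<0. \<exists>C. C \<in> measurable
                 (restrict_space (borel \<Otimes>\<^sub>M borel) (measure_support (\<mu> n) \<times> measure_support (\<mu> n)))
                 (prob_algebra (borel \<Otimes>\<^sub>M borel)) \<and>
               (\<forall>x\<in>measure_support (\<mu> n). \<forall>x'\<in>measure_support (\<mu> n).
                  C (x, x') \<in> couplings borel (K n x) (K n x') \<and> monotone_coupling d (C (x, x')) x x')"
    and coordinates: "\<forall>k\<in>coords d. \<forall>n<0. Q k n \<in> measurable borel (prob_algebra borel) \<and>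
               (\<forall>x\<in>measure_support (\<mu> n). distr (K n x) borel (\<lambda>y. y k) = Q k n (x k))"
  shows "\<forall>n\<le>-1. \<forall>x\<in>measure_support (\<mu> n). \<forall>x'\<in>measure_support (\<mu> n).
           iterated_kantorovich borel K (rho d a) n x x' =
             kantorovich borel (rho d a) (cond_law_X0 borel K n x) (cond_law_X0 borel K n x') \<and>
           iterated_kantorovich borel K (rho d a) n x x' =
             (\<Sum>\<^sub>\<infinity>k\<in>coords d. a k * iterated_kantorovich borel (Q k) delta n (x k) (x' k))"
proof -
  interpret P47 d a \<mu> K Q
    by (rule P47.intro[OF d_pos a_pos a_sum laws kernels markov conc monotonic coordinates])
  show ?thesis by (rule final)
qed


end
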